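(* Let $T$ be a countable tree without leaves (vertices of infinite degree are allowed), let $P=(p(x,y))_{x,y\in T}$ be a stochastic nearest-neighbour transition matrix on $T$, and let $\lambda\in\mathbb C$. Suppose the oriented edges of $T$ carry $\lambda$-weights $f(x,y)\in\mathbb C$ ($x\sim y$) satisfying, for every vertex $x$ and every neighbour $y$ of $x$: (i) $f(x,y)f(y,x)\neq 1$; (ii) the series $u(x,x)=\sum_{v\sim x}p(x,v)f(v,x)$ converges absolutely and $u(x,x)\neq\lambda$; (iii) $\lambda f(x,y)=p(x,y)+\bigl(u(x,x)-p(x,y)f(y,x)\bigr)f(x,y)$. Extend $f$ to all pairs by $f(x,x)=1$ and $f(x,y)=f(x_0,x_1)f(x_1,x_2)\cdots f(x_{k-1},x_k)$ when the geodesic from $x$ to $y$ is $[x=x_0,x_1,\dots,x_k=y]$. Then for every fixed $y\in T$, the function $x\mapsto f(x,y)$ satisfies $$\sum_{w\sim x}p(x,w)f(w,y)=\lambda f(x,y)\quad\text{for } x\neq y,\qquad \sum_{w\sim y}p(y,w)f(w,y)=u(y,y),$$ where the sums converge absolutely.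
   Context: A nearest-neighbour stochastic transition matrix means $p(x,y)>0$ if and only if $x$ and $y$ are neighbours ($x\sim y$), and $\sum_y p(x,y)=1$ for all $x$. The tree may have vertices of infinite degree; a leaf is a vertex of degree $1$. *)

theory Defs
  imports "HOL-Analysis.Analysis"
begin

definition graph :: "'a set \<Rightarrow> ('a \<Rightarrow> 'a \<Rightarrow> bool) \<Rightarrow> bool" where
  "graph V adj \<longleftrightarrow> (\<forall>x y. adj x y \<longrightarrow> x \<in> V \<and> y \<in> V \<and> adj y x \<and> x \<noteq> y)"

definition walk :: "('a \<Rightarrow> 'a \<Rightarrow> bool) \<Rightarrow> 'a list \<Rightarrow> bool" where
  "walk adj xs \<longleftrightarrow> xs \<noteq> [] \<and> (\<forall>i. Suc i < length xs \<longrightarrow> adj (xs ! i) (xs ! Suc i))"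

definition connected_graph :: "'a set \<Rightarrow> ('a \<Rightarrow> 'a \<Rightarrow> bool) \<Rightarrow> bool" where
  "connected_graph V adj \<longleftrightarrow>
     (\<forall>x\<in>V. \<forall>y\<in>V. \<exists>xs. walk adj xs \<and> hd xs = x \<and> last xs = y)"

definition is_cycle :: "('a \<Rightarrow> 'a \<Rightarrow> bool) \<Rightarrow> 'a list \<Rightarrow> bool" where
  "is_cycle adj xs \<longleftrightarrow> length xs \<ge> 3 \<and> distinct xs \<and> walk adj xs \<and> adj (last xs) (hd xs)"

definition tree :: "'a set \<Rightarrow> ('a \<Rightarrow> 'a \<Rightarrow> bool) \<Rightarrow> bool" where
  "tree V adj \<longleftrightarrow> graph V adj \<and> connected_graph V adj \<and> (\<nexists>xs. is_cycle adj xs)"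

definition leaf :: "('a \<Rightarrow> 'a \<Rightarrow> bool) \<Rightarrow> 'a \<Rightarrow> bool" where
  "leaf adj x \<longleftrightarrow> (\<exists>!y. adj x y)"

definition nn_stochastic :: "'a set \<Rightarrow> ('a \<Rightarrow> 'a \<Rightarrow> bool) \<Rightarrow> ('a \<Rightarrow> 'a \<Rightarrow> real) \<Rightarrow> bool" where
  "nn_stochastic V adj p \<longleftrightarrow>
     (\<forall>x\<in>V. \<forall>y\<in>V. p x y > 0 \<longleftrightarrow> adj x y) \<and>
     (\<forall>x\<in>V. \<forall>y\<in>V. p x y \<ge> 0) \<and>
     (\<forall>x\<in>V. (p x has_sum 1) V)"

text \<open>Geodesic: the (in a tree unique) path without repeated vertices from x to y.\<close>
definition geodesic :: "('a \<Rightarrow> 'a \<Rightarrow> bool) \<Rightarrow> 'a \<Rightarrow> 'a \<Rightarrow> 'a list" where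
  "geodesic adj x y = (THE xs. walk adj xs \<and> distinct xs \<and> hd xs = x \<and> last xs = y)"

text \<open>Multiplicative extension of edge weights along geodesics; f(x,x) = 1 (empty product).\<close>
definition ext_weight :: "('a \<Rightarrow> 'a \<Rightarrow> bool) \<Rightarrow> ('a \<Rightarrow> 'a \<Rightarrow> complex) \<Rightarrow> 'a \<Rightarrow> 'a \<Rightarrow> complex" where
  "ext_weight adj f x y =
     (let xs = geodesic adj x y in prod_list (map (\<lambda>(a, b). f a b) (zip xs (tl xs))))"

end

theory Submission imports Defs begin

lemma walk_single[simp]: "walk adj [x]" by (simp add: walk_def)

lemma walk_Cons: "walk adj (x # xs) \<longleftrightarrow> (xs = [] \<or> (adj x (hd xs) \<and> walk adj xs))"
proof (cases xs)
  case Nil then show ?thesis by (simp add: walk_def)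
next
  case (Cons a r)
  show ?thesis
  proof
    assume w: "walk adj (x # xs)"
    have "adj x a" using w Cons by (auto simp: walk_def)
    moreover have "walk adj xs" unfolding walk_def using w Cons
      by (auto simp: walk_def)
    ultimately show "xs = [] \<or> (adj x (hd xs) \<and> walk adj xs)" using Cons by simp
  next
    assume "xs = [] \<or> (adj x (hd xs) \<and> walk adj xs)"
    then have a: "adj x a" and w: "walk adj xs" using Cons by auto
    show "walk adj (x # xs)" unfolding walk_def
    proof (intro conjI allI impI)
      fix i assume "Suc i < length (x # xs)"
      then show "adj ((x # xs) ! i) ((x # xs) ! Suc i)"
        using a w Cons by (cases i) (auto simp: walk_def)
    qed simp
  qed
qed

lemma walk_append:
  assumes "xs \<noteq> []" "ys \<noteq> []"
  shows "walk adj (xs @ ys) \<longleftrightarrow> walk adj xs \<and> walk adj ys \<and> adj (last xs) (hd ys)"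
  using assms
proof (induction xs)
  case Nil then show ?case by simp
next
  case (Cons a xs)
  show ?case
  proof (cases "xs = []")
    case True then show ?thesis using Cons.prems by (auto simp add: walk_Cons)
  next
    case False
    then show ?thesis using Cons by (auto simp: walk_Cons)
  qed
qed

lemma walk_rev:
  assumes sym: "\<And>a b. adj a b \<Longrightarrow> adj b a"
  shows "walk adj xs \<Longrightarrow> walk adj (rev xs)"
proof (induction xs)
  case Nil then show ?case by (simp add: walk_def)
next
  case (Cons a xs)
  show ?case
  proof (cases "xs = []")
    case True then show ?thesis by simp
  next
    case False
    then have "adj a (hd xs)" "walk adj xs" using Cons.prems by (auto simp: walk_Cons)
    then show ?thesis using Cons.IH False sym
      by (subst rev.simps, subst walk_append) (auto simp: last_rev)
  qed
qed

lemma walk_suffix: "walk adj (a @ b) \<Longrightarrow> b \<noteq> [] \<Longrightarrow> walk adj b"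
  by (cases "a = []") (auto simp: walk_append)

lemma walk_prefix: "walk adj (a @ b) \<Longrightarrow> a \<noteq> [] \<Longrightarrow> walk adj a"
  by (cases "b = []") (auto simp: walk_append)

lemma path_exists:
  "walk adj xs \<Longrightarrow> \<exists>ys. walk adj ys \<and> distinct ys \<and> hd ys = hd xs \<and> last ys = last xs"
proof (induction xs)
  case Nil then show ?case by (simp add: walk_def)
next
  case (Cons x xs)
  show ?case
  proof (cases "xs = []")
    case True then show ?thesis by (intro exI[of _ "[x]"]) simp
  next
    case False
    then have a: "adj x (hd xs)" and w: "walk adj xs" using Cons.prems by (auto simp: walk_Cons)
    then obtain ys where ys: "walk adj ys" "distinct ys" "hd ys = hd xs" "last ys = last xs"
      using Cons.IH by blast
    have yne: "ys \<noteq> []" using ys(1) by (simp add: walk_def)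
    show ?thesis
    proof (cases "x \<in> set ys")
      case True
      then obtain u v where uv: "ys = u @ x # v" by (meson split_list)
      show ?thesis
        using ys uv False walk_suffix[of adj u "x # v"]
        by (intro exI[of _ "x # v"]) auto
    next
      case False
      show ?thesis using ys False a yne \<open>xs \<noteq> []\<close>
        by (intro exI[of _ "x # ys"]) (auto simp: walk_Cons)
    qed
  qed
qed

lemma distinct_hd_last: "distinct xs \<Longrightarrow> xs \<noteq> [] \<Longrightarrow> hd xs = last xs \<Longrightarrow> xs = [hd xs]"
  by (cases xs) (auto split: if_splits)

lemma path_unique_aux:
  assumes sym: "\<And>a b. adj a b \<Longrightarrow> adj b a"
    and nocyc: "\<nexists>xs. is_cycle adj xs"
  shows "\<And>P Q. length P + length Q = n \<Longrightarrow> walk adj P \<Longrightarrow> distinct P \<Longrightarrow> walk adj Q \<Longrightarrow> distinct Q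
     \<Longrightarrow> hd P = hd Q \<Longrightarrow> last P = last Q \<Longrightarrow> P = Q"
proof (induction n rule: less_induct)
  case (less n P Q)
  have Pne: "P \<noteq> []" and Qne: "Q \<noteq> []" using less.prems by (auto simp: walk_def)
  show ?case
  proof (cases "\<exists>z. z \<in> set P \<and> z \<in> set Q \<and> z \<noteq> hd P \<and> z \<noteq> last P")
    case True
    then obtain z where z: "z \<in> set P" "z \<in> set Q" "z \<noteq> hd P" "z \<noteq> last P" by blast
    obtain P1 P2 where P: "P = P1 @ z # P2" using z(1) by (meson split_list)
    obtain Q1 Q2 where Q: "Q = Q1 @ z # Q2" using z(2) by (meson split_list)
    have P1: "P1 \<noteq> []" using z(3) P by auto
    have P2: "P2 \<noteq> []" using z(4) P by auto
    have Q1: "Q1 \<noteq> []" using z(3) Q less.prems(6) by auto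
    have Q2: "Q2 \<noteq> []" using z(4) Q less.prems(7) by auto
    have wP: "walk adj (P1 @ [z])" "walk adj (z # P2)"
      using less.prems(2) P walk_prefix[of adj "P1 @ [z]" P2] walk_suffix[of adj P1 "z # P2"] by auto
    have wQ: "walk adj (Q1 @ [z])" "walk adj (z # Q2)"
      using less.prems(4) Q walk_prefix[of adj "Q1 @ [z]" Q2] walk_suffix[of adj Q1 "z # Q2"] by auto
    have e1: "P1 @ [z] = Q1 @ [z]"
      using less.IH[of "length (P1 @ [z]) + length (Q1 @ [z])" "P1 @ [z]" "Q1 @ [z]"]
        wP wQ P Q P1 Q1 P2 Q2 less.prems by auto
    have e2: "z # P2 = z # Q2"
      using less.IH[of "length (z # P2) + length (z # Q2)" "z # P2" "z # Q2"]
        wP wQ P Q P1 Q1 P2 Q2 less.prems by auto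
    show ?thesis using e1 e2 P Q by simp
  next
    case False
    note disj = False
    show ?thesis
    proof (rule ccontr)
      assume ne: "P \<noteq> Q"
      show False
      proof (cases "hd P = last P")
        case True
        then have "P = [hd P]" "Q = [hd Q]" using distinct_hd_last less.prems Pne Qne by metis+
        then show False using ne less.prems by metis
      next
        case hl: False
        obtain x P' where P: "P = x # P'" using Pne by (cases P) auto
        obtain Q' where Q: "Q = x # Q'" using Qne less.prems(6) P by (cases Q) auto
        have P'ne: "P' \<noteq> []" using hl P by auto
        have Q'ne: "Q' \<noteq> []" using hl Q less.prems(6,7) by auto
        obtain M y where QM: "Q' = M @ [y]" using Q'ne by (metis rev_exhaust)
        have ly: "last P = y" using less.prems(7) Q QM by simp
        have MP: "\<forall>m\<in>set M. m \<notin> set P"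
        proof
          fix m assume m: "m \<in> set M"
          have "m \<noteq> x" "m \<noteq> y" using less.prems(5) Q QM m by auto
          then show "m \<notin> set P" using disj m Q QM P ly by auto
        qed
        have wQ: "walk adj (x # M @ [y])" using less.prems(4) Q QM by simp
        define C where "C = P @ rev M"
        have cyc: "is_cycle adj C"
        proof (cases "M = []")
          case True
          then have "adj x y" using wQ by (simp add: walk_Cons)
          moreover have "length P \<ge> 3"
          proof -
            have "P' \<noteq> [y]" using ne True P Q QM by auto
            moreover have "last P' = y" using ly P P'ne by simp
            ultimately have "length P' \<ge> 2" using P'ne
              by (cases P') (auto split: if_splits simp: Suc_le_eq)
            then show ?thesis using P by simp
          qed
          ultimately show ?thesis using True less.prems P ly sym unfolding C_def is_cycle_def by auto
        next
          case Mne: False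
          have wM: "walk adj M" using wQ Mne walk_prefix[of adj M "[y]"] walk_suffix[of adj "[x]" "M @ [y]"]
            by auto
          have a1: "adj (last M) y" using wQ Mne walk_append[of "x # M" "[y]" adj] by auto
          have a2: "adj x (hd M)" using wQ Mne by (simp add: walk_Cons)
          have wC: "walk adj C" unfolding C_def
            using walk_append[of P "rev M" adj] Pne Mne less.prems(2) walk_rev[OF sym wM] a1 sym ly
            by (simp add: hd_rev)
          have dC: "distinct C" unfolding C_def using less.prems(5) Q QM MP less.prems(3) by auto
          have lC: "length C \<ge> 3" unfolding C_def using P P'ne Mne by (cases P') (auto simp: Suc_le_eq)
          have "adj (last C) (hd C)" unfolding C_def using a2 sym Mne Pne P by (simp add: last_rev)
          then show ?thesis using wC dC lC unfolding is_cycle_def by simp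
        qed
        then show False using nocyc by blast
      qed
    qed
  qed
qed

lemma path_unique:
  assumes "tree V adj" "walk adj P" "distinct P" "walk adj Q" "distinct Q" "hd P = hd Q" "last P = last Q"
  shows "P = Q"
proof -
  have sym: "\<And>a b. adj a b \<Longrightarrow> adj b a" and nc: "\<nexists>xs. is_cycle adj xs"
    using assms(1) unfolding tree_def graph_def by auto
  show ?thesis using path_unique_aux[OF sym nc refl] assms by blast
qed

lemma geodesic_eq:
  assumes "tree V adj" "walk adj P" "distinct P" "hd P = x" "last P = y"
  shows "geodesic adj x y = P"
  unfolding geodesic_def
  using assms path_unique[OF assms(1)] by (intro the_equality) auto

lemma ext_weight_eq:
  assumes "tree V adj" "walk adj P" "distinct P" "hd P = x" "last P = y"
  shows "ext_weight adj f x y = prod_list (map (\<lambda>(a, b). f a b) (zip P (tl P)))"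
  unfolding ext_weight_def Let_def geodesic_eq[OF assms] ..

lemma sum_step:
  fixes h g :: "'a \<Rightarrow> complex"
  assumes hs: "(\<lambda>w. norm (h w)) summable_on S" and x1: "x1 \<in> S"
    and eq: "\<And>w. w \<in> S \<Longrightarrow> w \<noteq> x1 \<Longrightarrow> g w = h w * c"
  shows "(\<lambda>w. norm (g w)) summable_on S \<and> infsum g S = g x1 + (infsum h S - h x1) * c"
proof -
  have SS: "S = insert x1 (S - {x1})" using x1 by auto
  have hs': "(\<lambda>w. norm (h w)) summable_on (S - {x1})"
    using hs SS summable_on_insert_iff by metis
  have "(\<lambda>w. norm (h w) * norm c) summable_on (S - {x1})"
    by (rule summable_on_cmult_left[OF hs'])
  then have "(\<lambda>w. norm (g w)) summable_on (S - {x1})"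
    by (rule iffD1[OF summable_on_cong, rotated]) (simp add: eq norm_mult)
  then have gs: "(\<lambda>w. norm (g w)) summable_on S" using SS summable_on_insert_iff by metis
  have hsum: "h summable_on (S - {x1})" using abs_summable_summable hs' by blast
  have gsum: "g summable_on (S - {x1})"
    using abs_summable_summable \<open>(\<lambda>w. norm (g w)) summable_on (S - {x1})\<close> by blast
  have "infsum g S = g x1 + infsum g (S - {x1})"
    using infsum_insert[OF gsum, of x1] SS by simp
  also have "infsum g (S - {x1}) = infsum (\<lambda>w. h w * c) (S - {x1})"
    by (rule infsum_cong) (simp add: eq)
  also have "\<dots> = infsum h (S - {x1}) * c" by (rule infsum_cmult_left') 
  also have "infsum h (S - {x1}) = infsum h S - h x1"
    using infsum_insert[OF hsum, of x1] SS by simp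
  finally show ?thesis using gs by simp
qed

theorem lemma3p1:
  fixes V :: "'a set" and adj :: "'a \<Rightarrow> 'a \<Rightarrow> bool"
    and p :: "'a \<Rightarrow> 'a \<Rightarrow> real" and f :: "'a \<Rightarrow> 'a \<Rightarrow> complex" and lam :: complex
  assumes "countable V"
    and "tree V adj"
    and "\<forall>x\<in>V. \<not> leaf adj x"
    and "nn_stochastic V adj p"
    and i: "\<forall>x\<in>V. \<forall>y. adj x y \<longrightarrow> f x y * f y x \<noteq> 1"
    and ii: "\<forall>x\<in>V. ((\<lambda>v. norm (of_real (p x v) * f v x)) summable_on {v. adj x v})
                  \<and> (infsum (\<lambda>v. of_real (p x v) * f v x) {v. adj x v}) \<noteq> lam"
    and iii: "\<forall>x\<in>V. \<forall>y. adj x y \<longrightarrow>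
               lam * f x y = of_real (p x y)
                 + ((infsum (\<lambda>v. of_real (p x v) * f v x) {v. adj x v}) - of_real (p x y) * f y x) * f x y"
  shows "\<forall>y\<in>V.
           (\<forall>x\<in>V. x \<noteq> y \<longrightarrow>
              ((\<lambda>w. norm (of_real (p x w) * ext_weight adj f w y)) summable_on {w. adj x w})
              \<and> (infsum (\<lambda>w. of_real (p x w) * ext_weight adj f w y) {w. adj x w}) = lam * ext_weight adj f x y)
           \<and> ((\<lambda>w. norm (of_real (p y w) * ext_weight adj f w y)) summable_on {w. adj y w})
           \<and> (infsum (\<lambda>w. of_real (p y w) * ext_weight adj f w y) {w. adj y w})
               = (infsum (\<lambda>v. of_real (p y v) * f v y) {v. adj y v})"
proof (intro ballI conjI allI impI)
  note tr = assms(2)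
  have gr: "graph V adj" and con: "connected_graph V adj" using tr by (auto simp: tree_def)
  have sym: "\<And>a b. adj a b \<Longrightarrow> adj b a" and irr: "\<And>a b. adj a b \<Longrightarrow> a \<noteq> b"
    and inV: "\<And>a b. adj a b \<Longrightarrow> a \<in> V"
    using gr unfolding graph_def by blast+
  have edge: "ext_weight adj f w y = f w y" if "adj w y" for w y
  proof -
    have "walk adj [w, y]" using that by (simp add: walk_Cons)
    moreover have "distinct [w, y]" using irr that by auto
    ultimately show ?thesis using ext_weight_eq[OF tr, of "[w, y]" w y, where f=f] by simp
  qed
  fix y assume yV: "y \<in> V"
  {
    fix x assume xV: "x \<in> V" and xy: "x \<noteq> y"
    obtain xs where "walk adj xs" "hd xs = x" "last xs = y"
      using con xV yV unfolding connected_graph_def by blast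
    then obtain G where G: "walk adj G" "distinct G" "hd G = x" "last G = y"
      using path_exists by metis
    have Gne: "G \<noteq> []" using G(1) by (simp add: walk_def)
    obtain x1 r where Gx: "G = x # x1 # r"
      using G(3,4) Gne xy by (cases G; cases "tl G") auto
    have a1: "adj x x1" and w1: "walk adj (x1 # r)" using G(1) Gx by (auto simp: walk_Cons)
    have d1: "distinct (x1 # r)" using G(2) Gx by simp
    have l1: "last (x1 # r) = y" using G(4) Gx by simp
    have Fx: "ext_weight adj f x y = f x x1 * ext_weight adj f x1 y"
      using ext_weight_eq[OF tr G(1,2,3,4), where f=f] ext_weight_eq[OF tr w1 d1 _ l1, where f=f] Gx by simp
    have Fw: "ext_weight adj f w y = f w x * ext_weight adj f x y"
      if aw: "adj x w" and wx1: "w \<noteq> x1" for w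
    proof -
      have wG: "w \<notin> set G"
      proof
        assume "w \<in> set G"
        then obtain a b where ab: "G = a @ w # b" by (meson split_list)
        have ane: "a \<noteq> []" using ab G(3) irr[OF aw] by auto
        have "walk adj (a @ [w])" using G(1) ab walk_prefix[of adj "a @ [w]" b] by simp
        moreover have "distinct (a @ [w])" using G(2) ab by simp
        moreover have "walk adj [x, w]" using aw by (simp add: walk_Cons)
        moreover have "distinct [x, w]" using irr[OF aw] by simp
        moreover have "hd (a @ [w]) = x" using ab ane G(3) by simp
        ultimately have "a @ [w] = [x, w]" using path_unique[OF tr] by fastforce
        then have "a = [x]" by simp
        then show False using ab Gx wx1 by simp
      qed
      have "walk adj (w # G)" using G(1) Gne G(3) sym[OF aw] by (simp add: walk_Cons)
      moreover have "distinct (w # G)" using wG G(2) by simp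
      ultimately have "ext_weight adj f w y = prod_list (map (\<lambda>(a, b). f a b) (zip (w # G) G))"
        using ext_weight_eq[OF tr, of "w # G" w y, where f=f] G(4) Gne by simp
      then show ?thesis using ext_weight_eq[OF tr G(1,2,3,4), where f=f] Gx by simp
    qed
    have hs: "(\<lambda>v. norm (of_real (p x v) * f v x)) summable_on {v. adj x v}" using ii xV by blast
    have st: "((\<lambda>w. norm (of_real (p x w) * ext_weight adj f w y)) summable_on {w. adj x w})
      \<and> infsum (\<lambda>w. of_real (p x w) * ext_weight adj f w y) {w. adj x w}
        = of_real (p x x1) * ext_weight adj f x1 y
          + (infsum (\<lambda>v. of_real (p x v) * f v x) {v. adj x v} - of_real (p x x1) * f x1 x) * ext_weight adj f x y"
      using sum_step[OF hs, of x1 "\<lambda>w. of_real (p x w) * ext_weight adj f w y" "ext_weight adj f x y"]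
        a1 Fw by simp
    then show "(\<lambda>w. norm (of_real (p x w) * ext_weight adj f w y)) summable_on {w. adj x w}" by blast
    have e3: "lam * f x x1 = of_real (p x x1)
                 + ((infsum (\<lambda>v. of_real (p x v) * f v x) {v. adj x v}) - of_real (p x x1) * f x1 x) * f x x1"
      using iii xV a1 by blast
    show "infsum (\<lambda>w. of_real (p x w) * ext_weight adj f w y) {w. adj x w} = lam * ext_weight adj f x y"
    proof -
      let ?u = "infsum (\<lambda>v. of_real (p x v) * f v x) {v. adj x v}"
      let ?F1 = "ext_weight adj f x1 y"
      have "infsum (\<lambda>w. of_real (p x w) * ext_weight adj f w y) {w. adj x w}
          = of_real (p x x1) * ?F1 + (?u - of_real (p x x1) * f x1 x) * (f x x1 * ?F1)"
        using st Fx by simp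
      also have "\<dots> = (of_real (p x x1) + (?u - of_real (p x x1) * f x1 x) * f x x1) * ?F1"
        by (simp only: distrib_right mult.assoc)
      also have "\<dots> = lam * f x x1 * ?F1" using e3 by simp
      finally show ?thesis using Fx by (simp add: mult.assoc)
    qed
  }
  have hs: "(\<lambda>v. norm (of_real (p y v) * f v y)) summable_on {v. adj y v}" using ii yV by blast
  show "(\<lambda>w. norm (of_real (p y w) * ext_weight adj f w y)) summable_on {w. adj y w}"
    using hs by (rule iffD1[OF summable_on_cong, rotated]) (simp add: edge sym)
  show "infsum (\<lambda>w. of_real (p y w) * ext_weight adj f w y) {w. adj y w}
      = infsum (\<lambda>v. of_real (p y v) * f v y) {v. adj y v}"
    by (rule infsum_cong) (simp add: edge sym)
qed

end
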